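(* Let $\mu,\mu',\nu$ be subdistributions over closed nondeterministic expressions and $\alpha$ an action such that $\nu\simeq\mu$ (lifted weak congruence) and $\mu\xrightarrow{\alpha}\mu'$ (combined transition). Then there exists $\nu'$ such that $\nu\xRightarrow{\alpha}\nu'$ and $\nu'\approx\mu'$.
   Context: Fix a set $\mathsf{Act}$ of actions containing $\tau$. Nondeterministic expressions: $E ::= 0 \mid X \mid \alpha.P \mid \mathrm{rec}\,X.E \mid E + E$; probabilistic expressions: $P ::= \partial(E) \mid P \oplus_p P$ ($0<p<1$); closed means no free variables. Subdistributions $\mu$ over $S$: $\mu:S\to\mathbb R_{\ge0}$, $|\mu|\le1$; $\delta_s$ Dirac. Semantics: least relations with $\partial(E)\mapsto\delta_E$; $P\oplus_pQ\mapsto p\mu+(1-p)\nu$ if $P\mapsto\mu,Q\mapsto\nu$; $\alpha.P\xrightarrow{\alpha}\mu$ if $P\mapsto\mu$; $\mathrm{rec}\,X.E\xrightarrow{\alpha}\mu$ if $E[\mathrm{rec}\,X.E/X]\xrightarrow{\alpha}\mu$; $E+F\xrightarrow{\alpha}\mu$ and $F+E\xrightarrow{\alpha}\mu$ if $E\xrightarrow{\alpha}\mu$. Combined transitions on subdistributions: least relation with $\delta_E\xrightarrow{\alpha}\mu$ if $E\xrightarrow{\alpha}\mu$, closed under $\sum p_i\nu_i\xrightarrow{\alpha}\sum p_i\mu_i$ ($\nu_i\xrightarrow{\alpha}\mu_i$, $p_i\ge0$, $\sum p_i\le1$). A derivation is $(\mu_i^{\to},\mu_i^{\times})_{i\in\mathbb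 N}$ with $\mu_i^{\to}\xrightarrow{\tau}\mu^{\to}_{i+1}+\mu^{\times}_{i+1}$; $\mu\Rightarrow\nu$ iff a derivation has $\mu=\mu_0^{\to}+\mu_0^{\times}$, $\nu=\sum_i\mu_i^\times$. $\mu\xRightarrow{\alpha}\nu$ iff $\mu\Rightarrow\xrightarrow{\alpha}\Rightarrow\nu$; $\xRightarrow{\hat\alpha}$ is $\Rightarrow$ for $\alpha=\tau$ and $\xRightarrow{\alpha}$ otherwise. Lifting of a relation $\mathcal R$ on expressions to subdistributions: least relation with $\delta_E\mathcal R\delta_F$ for $E\mathcal RF$, closed under $\sum p_i\mu_i\mathcal R\sum p_i\nu_i$ ($\mu_i\mathcal R\nu_i$, $p_i\ge0$, $\sum p_i\le1$). Weak bisimulation: relation $\mathcal R$ on closed expressions such that if $E\mathcal RF$ and $E\xrightarrow{\alpha}\mu$ then $F\xRightarrow{\hat\alpha}\nu$ with $\mu\mathcal R\nu$, and symmetrically; $\approx$ is weak bisimilarity. Closed $E,F$ are weakly congruent, $E\simeq F$, iff $E\xrightarrow{\alpha}\mu$ implies $F\xRightarrow{\alpha}\nu$ with $\mu\approx\nu$, and $F\xrightarrow{\alpha}\nu$ implies $E\xRightarrow{\alpha}\mu$ with $\mu\approx\nu$. *)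

theory Defs
  imports "HOL-Analysis.Infinite_Sum"
begin

datatype 'a act = Tau | Vis 'a

typedef prob = "{p::real. 0 < p \<and> p < 1}"
  by (rule exI[of _ "1/2"]) simp

type_synonym var = nat

datatype 'a nexp =
    Nil
  | Var var
  | Pref "'a act" "'a pexp"
  | Rec var "'a nexp"
  | Sum "'a nexp" "'a nexp"
and 'a pexp =
    Dirac "'a nexp"
  | PCh "'a pexp" prob "'a pexp"

fun fv_n :: "'a nexp \<Rightarrow> var set" and fv_p :: "'a pexp \<Rightarrow> var set" where
  "fv_n Nil = {}"
| "fv_n (Var X) = {X}"
| "fv_n (Pref a P) = fv_p P"
| "fv_n (Rec X E) = fv_n E - {X}"
| "fv_n (Sum E F) = fv_n E \<union> fv_n F"
| "fv_p (Dirac E) = fv_n E"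
| "fv_p (PCh P p Q) = fv_p P \<union> fv_p Q"

definition closed :: "'a nexp \<Rightarrow> bool" where
  "closed E \<longleftrightarrow> fv_n E = {}"

text \<open>Substitution E[T/X]; it is only ever used with a closed T (rec X.E of a
closed expression), so no variable capture can occur.\<close>
fun subst_n :: "'a nexp \<Rightarrow> var \<Rightarrow> 'a nexp \<Rightarrow> 'a nexp"
and subst_p :: "'a pexp \<Rightarrow> var \<Rightarrow> 'a nexp \<Rightarrow> 'a pexp" where
  "subst_n Nil X T = Nil"
| "subst_n (Var Y) X T = (if Y = X then T else Var Y)"
| "subst_n (Pref a P) X T = Pref a (subst_p P X T)"
| "subst_n (Rec Y E) X T = (if Y = X then Rec Y E else Rec Y (subst_n E X T))"
| "subst_n (Sum E F) X T = Sum (subst_n E X T) (subst_n F X T)"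
| "subst_p (Dirac E) X T = Dirac (subst_n E X T)"
| "subst_p (PCh P p Q) X T = PCh (subst_p P X T) p (subst_p Q X T)"

type_synonym 'a dist = "'a nexp \<Rightarrow> real"

definition subdist :: "'a dist \<Rightarrow> bool" where
  "subdist \<mu> \<longleftrightarrow> (\<forall>s. 0 \<le> \<mu> s) \<and> (\<forall>s. \<not> closed s \<longrightarrow> \<mu> s = 0)
      \<and> \<mu> summable_on UNIV \<and> infsum \<mu> UNIV \<le> 1"

definition dirac :: "'a nexp \<Rightarrow> 'a dist" where
  "dirac E = (\<lambda>s. if s = E then 1 else 0)"

definition comb :: "(nat \<Rightarrow> real) \<Rightarrow> (nat \<Rightarrow> 'a dist) \<Rightarrow> 'a dist" where
  "comb p \<mu> = (\<lambda>s. \<Sum>i. p i * \<mu> i s)"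

definition weights :: "(nat \<Rightarrow> real) \<Rightarrow> bool" where
  "weights p \<longleftrightarrow> (\<forall>i. 0 \<le> p i) \<and> summable p \<and> suminf p \<le> 1"

inductive pstep :: "'a pexp \<Rightarrow> 'a dist \<Rightarrow> bool" where
  "pstep (Dirac E) (dirac E)"
| "pstep P \<mu> \<Longrightarrow> pstep Q \<nu> \<Longrightarrow>
     pstep (PCh P p Q) (\<lambda>s. Rep_prob p * \<mu> s + (1 - Rep_prob p) * \<nu> s)"

inductive ntrans :: "'a nexp \<Rightarrow> 'a act \<Rightarrow> 'a dist \<Rightarrow> bool" where
  "pstep P \<mu> \<Longrightarrow> ntrans (Pref a P) a \<mu>"
| "ntrans (subst_n E X (Rec X E)) a \<mu> \<Longrightarrow> ntrans (Rec X E) a \<mu>"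
| "ntrans E a \<mu> \<Longrightarrow> ntrans (Sum E F) a \<mu>"
| "ntrans E a \<mu> \<Longrightarrow> ntrans (Sum F E) a \<mu>"

inductive ctrans :: "'a dist \<Rightarrow> 'a act \<Rightarrow> 'a dist \<Rightarrow> bool" where
  base: "closed E \<Longrightarrow> ntrans E a \<mu> \<Longrightarrow> ctrans (dirac E) a \<mu>"
| comb: "weights p \<Longrightarrow> \<forall>i. ctrans (\<nu> i) a (\<mu> i) \<Longrightarrow> ctrans (comb p \<nu>) a (comb p \<mu>)"

definition derivation :: "(nat \<Rightarrow> 'a dist) \<Rightarrow> (nat \<Rightarrow> 'a dist) \<Rightarrow> bool" where
  "derivation mto mx \<longleftrightarrow> (\<forall>i. subdist (mto i) \<and> subdist (mx i)) \<and>
     (\<forall>i. ctrans (mto i) Tau (\<lambda>s. mto (Suc i) s + mx (Suc i) s))"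

definition weak :: "'a dist \<Rightarrow> 'a dist \<Rightarrow> bool" where
  "weak \<mu> \<nu> \<longleftrightarrow> (\<exists>mto mx. derivation mto mx \<and> \<mu> = (\<lambda>s. mto 0 s + mx 0 s)
       \<and> \<nu> = (\<lambda>s. \<Sum>i. mx i s))"

definition wtrans :: "'a dist \<Rightarrow> 'a act \<Rightarrow> 'a dist \<Rightarrow> bool" where
  "wtrans \<mu> a \<nu> \<longleftrightarrow> (\<exists>\<mu>1 \<mu>2. weak \<mu> \<mu>1 \<and> ctrans \<mu>1 a \<mu>2 \<and> weak \<mu>2 \<nu>)"

definition wtrans_hat :: "'a dist \<Rightarrow> 'a act \<Rightarrow> 'a dist \<Rightarrow> bool" where
  "wtrans_hat \<mu> a \<nu> \<longleftrightarrow> (if a = Tau then weak \<mu> \<nu> else wtrans \<mu> a \<nu>)"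

inductive lift :: "('a nexp \<Rightarrow> 'a nexp \<Rightarrow> bool) \<Rightarrow> 'a dist \<Rightarrow> 'a dist \<Rightarrow> bool"
  for R where
  base: "R E F \<Longrightarrow> lift R (dirac E) (dirac F)"
| comb: "weights p \<Longrightarrow> \<forall>i. lift R (\<mu> i) (\<nu> i) \<Longrightarrow> lift R (comb p \<mu>) (comb p \<nu>)"

definition weak_bisimulation :: "('a nexp \<Rightarrow> 'a nexp \<Rightarrow> bool) \<Rightarrow> bool" where
  "weak_bisimulation R \<longleftrightarrow>
     (\<forall>E F. R E F \<longrightarrow> closed E \<and> closed F) \<and>
     (\<forall>E F a \<mu>. R E F \<and> ntrans E a \<mu> \<longrightarrow> (\<exists>\<nu>. wtrans_hat (dirac F) a \<nu> \<and> lift R \<mu> \<nu>)) \<and>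
     (\<forall>E F a \<nu>. R E F \<and> ntrans F a \<nu> \<longrightarrow> (\<exists>\<mu>. wtrans_hat (dirac E) a \<mu> \<and> lift R \<mu> \<nu>))"

definition wbisim :: "'a nexp \<Rightarrow> 'a nexp \<Rightarrow> bool" where
  "wbisim E F \<longleftrightarrow> (\<exists>R. weak_bisimulation R \<and> R E F)"

definition wcong :: "'a nexp \<Rightarrow> 'a nexp \<Rightarrow> bool" where
  "wcong E F \<longleftrightarrow> closed E \<and> closed F \<and>
     (\<forall>a \<mu>. ntrans E a \<mu> \<longrightarrow> (\<exists>\<nu>. wtrans (dirac F) a \<nu> \<and> lift wbisim \<mu> \<nu>)) \<and>
     (\<forall>a \<nu>. ntrans F a \<nu> \<longrightarrow> (\<exists>\<mu>. wtrans (dirac E) a \<mu> \<and> lift wbisim \<mu> \<nu>))"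

end

theory Submission
  imports Defs "HOL-Library.Nat_Bijection"
begin

lemma INS:
  fixes f :: "nat \<Rightarrow> real"
  assumes "summable f" "\<And>n. 0 \<le> f n"
  shows "infsum f UNIV = suminf f"
  by (meson assms infsumI summable_sums sums_nonneg_imp_has_sum)

lemma single_le_suminf:
  fixes f :: "nat \<Rightarrow> real"
  assumes "summable f" "\<And>n. 0 \<le> f n"
  shows "f i \<le> suminf f"
  using sum_le_suminf[of f "{i}"] assms by auto

lemma fubini_nat:
  fixes a :: "nat \<Rightarrow> nat \<Rightarrow> real"
  assumes nn: "\<And>i j. 0 \<le> a i j" and s1: "\<And>i. summable (a i)"
    and s2: "summable (\<lambda>i. suminf (a i))"
  shows "(\<lambda>(i,j). a i j) summable_on UNIV"
    and "infsum (\<lambda>(i,j). a i j) UNIV = (\<Sum>i. \<Sum>j. a i j)"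
proof -
  have bound: "sum (\<lambda>(i,j). a i j) F \<le> (\<Sum>i. \<Sum>j. a i j)" if "finite F" for F
  proof -
    define n where "n = Suc (Max (fst ` F \<union> snd ` F))"
    have sub: "F \<subseteq> {..<n} \<times> {..<n}"
    proof
      fix x assume "x \<in> F"
      then have "fst x \<le> Max (fst ` F \<union> snd ` F)" "snd x \<le> Max (fst ` F \<union> snd ` F)"
        using that by (auto intro!: Max_ge)
      then show "x \<in> {..<n} \<times> {..<n}" unfolding n_def by (cases x) auto
    qed
    have "sum (\<lambda>(i,j). a i j) F \<le> sum (\<lambda>(i,j). a i j) ({..<n} \<times> {..<n})"
      by (rule sum_mono2) (use sub nn in auto)
    also have "\<dots> = (\<Sum>i<n. \<Sum>j<n. a i j)"
      by (simp add: sum.cartesian_product)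
    also have "\<dots> \<le> (\<Sum>i<n. \<Sum>j. a i j)"
      by (intro sum_mono sum_le_suminf) (use s1 nn in auto)
    also have "\<dots> \<le> (\<Sum>i. \<Sum>j. a i j)"
      by (intro sum_le_suminf s2) (use s1 nn in \<open>auto intro: suminf_nonneg\<close>)
    finally show ?thesis .
  qed
  show S: "(\<lambda>(i,j). a i j) summable_on UNIV"
    by (rule nonneg_bdd_above_summable_on) (use nn bound in \<open>auto simp: bdd_above_def\<close>)
  have "infsum (\<lambda>x. infsum (a x) UNIV) UNIV = infsum (\<lambda>(x,y). a x y) (UNIV \<times> UNIV)"
    by (rule infsum_Sigma'_banach) (use S in simp)
  moreover have "infsum (\<lambda>x. infsum (a x) UNIV) UNIV = (\<Sum>i. \<Sum>j. a i j)"
    using INS[OF s1 nn] INS[OF s2] s1 nn by (simp add: suminf_nonneg)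
  ultimately show "infsum (\<lambda>(i,j). a i j) UNIV = (\<Sum>i. \<Sum>j. a i j)" by simp
qed

lemma swap_nat:
  fixes a :: "nat \<Rightarrow> nat \<Rightarrow> real"
  assumes nn: "\<And>i j. 0 \<le> a i j" and s1: "\<And>i. summable (a i)"
    and s2: "summable (\<lambda>i. suminf (a i))"
  shows "(\<Sum>i. \<Sum>j. a i j) = (\<Sum>j. \<Sum>i. a i j)"
    and "summable (\<lambda>j. \<Sum>i. a i j)"
    and "\<And>j. summable (\<lambda>i. a i j)"
proof -
  show c: "summable (\<lambda>i. a i j)" for j
    by (rule summable_comparison_test'[OF s2]) (use nn s1 single_le_suminf in auto)
  have S: "(\<lambda>(i,j). a i j) summable_on UNIV" by (rule fubini_nat(1)[OF nn s1 s2])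
  have S': "(\<lambda>(j,i). a i j) summable_on (UNIV \<times> UNIV)"
    using S summable_on_swap[of "\<lambda>(i,j). a i j" UNIV UNIV] by simp
  have "(\<lambda>j. infsum (\<lambda>i. a i j) UNIV) summable_on UNIV"
    using summable_on_Sigma_banach[of "\<lambda>j i. a i j" UNIV "\<lambda>_. UNIV"] S' by simp
  then have "(\<lambda>j. \<Sum>i. a i j) summable_on UNIV"
    using INS[OF c nn] by simp
  then show s3: "summable (\<lambda>j. \<Sum>i. a i j)" by (rule summable_on_imp_summable)
  have "infsum (\<lambda>x. infsum (\<lambda>y. a x y) UNIV) UNIV = infsum (\<lambda>y. infsum (\<lambda>x. a x y) UNIV) UNIV"
    by (rule infsum_swap_banach) (use S in simp)
  then show "(\<Sum>i. \<Sum>j. a i j) = (\<Sum>j. \<Sum>i. a i j)"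
    using INS[OF s1 nn] INS[OF c nn] INS[OF s2] INS[OF s3] nn s1 c
    by (simp add: suminf_nonneg)
qed

lemma reindex_nat:
  fixes a :: "nat \<Rightarrow> nat \<Rightarrow> real"
  assumes nn: "\<And>i j. 0 \<le> a i j" and s1: "\<And>i. summable (a i)"
    and s2: "summable (\<lambda>i. suminf (a i))"
  shows "summable (\<lambda>n. a (fst (prod_decode n)) (snd (prod_decode n)))"
    and "(\<Sum>n. a (fst (prod_decode n)) (snd (prod_decode n))) = (\<Sum>i. \<Sum>j. a i j)"
proof -
  have S: "(\<lambda>(i,j). a i j) summable_on UNIV" by (rule fubini_nat(1)[OF nn s1 s2])
  have b: "bij_betw prod_decode UNIV UNIV" by (simp add: bij_prod_decode)
  have "(\<lambda>n. (\<lambda>(i,j). a i j) (prod_decode n)) summable_on UNIV"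
    using summable_on_reindex_bij_betw[OF b] S by blast
  then have S2: "(\<lambda>n. a (fst (prod_decode n)) (snd (prod_decode n))) summable_on UNIV"
    by (simp add: case_prod_beta)
  then show s3: "summable (\<lambda>n. a (fst (prod_decode n)) (snd (prod_decode n)))"
    by (rule summable_on_imp_summable)
  have "infsum (\<lambda>n. (\<lambda>(i,j). a i j) (prod_decode n)) UNIV = infsum (\<lambda>(i,j). a i j) UNIV"
    by (rule infsum_reindex_bij_betw[OF b])
  then show "(\<Sum>n. a (fst (prod_decode n)) (snd (prod_decode n))) = (\<Sum>i. \<Sum>j. a i j)"
    using fubini_nat(2)[OF nn s1 s2] INS[OF s3] nn by (simp add: case_prod_beta)
qed

lemma dirac_nn[simp]: "0 \<le> dirac E s" and dirac_le1[simp]: "dirac E s \<le> 1"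
  by (auto simp: dirac_def)

lemma weightsD: "weights p \<Longrightarrow> 0 \<le> p i" "weights p \<Longrightarrow> summable p" "weights p \<Longrightarrow> suminf p \<le> 1"
  by (auto simp: weights_def)

lemma comb_summ:
  assumes "weights p" "\<And>i. 0 \<le> f i" "\<And>i. f i \<le> C"
  shows "summable (\<lambda>i. p i * f i)"
proof (rule summable_comparison_test'[where g="\<lambda>i. p i * C"])
  show "summable (\<lambda>i. p i * C)" using weightsD(2)[OF assms(1)] by (rule summable_mult2)
  show "norm (p i * f i) \<le> p i * C" for i
    using assms weightsD(1)[OF assms(1), of i] by (simp add: abs_mult mult_left_mono)
qed

lemma comb_nn:
  assumes "weights p" "\<And>i. 0 \<le> f i s" "\<And>i. f i s \<le> C"
  shows "0 \<le> comb p f s"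
  unfolding comb_def using comb_summ[OF assms(1), of "\<lambda>i. f i s" C] assms weightsD(1)[OF assms(1)]
  by (auto intro!: suminf_nonneg)

lemma comb_le:
  assumes "weights p" "\<And>i. 0 \<le> f i s" "\<And>i. f i s \<le> C" "0 \<le> C"
  shows "comb p f s \<le> C"
proof -
  have "comb p f s \<le> (\<Sum>i. p i * C)"
    unfolding comb_def
    by (rule suminf_le) (use assms weightsD[OF assms(1)] comb_summ[OF assms(1), of "\<lambda>i. f i s" C]
        in \<open>auto intro: mult_left_mono summable_mult2\<close>)
  also have "\<dots> = suminf p * C" using suminf_mult2[OF weightsD(2)[OF assms(1)]] by simp
  also have "\<dots> \<le> C" using weightsD(3)[OF assms(1)] assms(4) suminf_nonneg[OF weightsD(2)[OF assms(1)] weightsD(1)[OF assms(1)]]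
    by (simp add: mult_left_le_one_le)
  finally show ?thesis .
qed

lemma comb_cong: "(\<And>i. p i \<noteq> 0 \<Longrightarrow> f i = g i) \<Longrightarrow> comb p f = comb p g"
  unfolding comb_def by (rule ext, rule arg_cong[where f=suminf]) (metis mult_zero_left)

lemma comb_add:
  assumes "weights p" "\<And>i s. 0 \<le> f i s" "\<And>i s. f i s \<le> C" "\<And>i s. 0 \<le> g i s" "\<And>i s. g i s \<le> D"
  shows "comb p (\<lambda>i s. f i s + g i s) = (\<lambda>s. comb p f s + comb p g s)"
  unfolding comb_def
  using suminf_add[OF comb_summ[OF assms(1), of "\<lambda>i. f i _" C] comb_summ[OF assms(1), of "\<lambda>i. g i _" D]] assms
  by (simp add: distrib_left)

lemma comb_const:
  assumes "weights p"
  shows "comb p (\<lambda>i. f) = (\<lambda>s. suminf p * f s)"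
  unfolding comb_def using suminf_mult2[OF weightsD(2)[OF assms]] by simp

definition unitw :: "nat \<Rightarrow> real" where "unitw = (\<lambda>j. if j = 0 then 1 else 0)"

lemma unit_weights: "weights unitw"
proof -
  have "suminf unitw = 1" unfolding unitw_def by (subst suminf_finite[of "{0}"]) auto
  moreover have "summable unitw" unfolding unitw_def by (rule summable_finite[of "{0}"]) auto
  ultimately show ?thesis by (auto simp: weights_def unitw_def)
qed

lemma suminf_unit: "suminf unitw = 1"
  unfolding unitw_def by (subst suminf_finite[of "{0}"]) auto

lemma comb_unit: "comb unitw (\<lambda>j. f) = f"
  using comb_const[OF unit_weights] by (simp add: suminf_unit)

lemma comb_comb:
  fixes Q :: "nat \<Rightarrow> nat \<Rightarrow> real" and g :: "nat \<Rightarrow> nat \<Rightarrow> 'a dist"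
  assumes p: "weights p" and Q: "\<And>i. weights (Q i)"
    and g: "\<And>i j s. 0 \<le> g i j s" "\<And>i j s. g i j s \<le> 1"
  defines "w \<equiv> \<lambda>n. p (fst (prod_decode n)) * Q (fst (prod_decode n)) (snd (prod_decode n))"
  shows "weights w"
    and "comb p (\<lambda>i. comb (Q i) (g i)) = comb w (\<lambda>n. g (fst (prod_decode n)) (snd (prod_decode n)))"
proof -
  note pw = weightsD[OF p] and Qw = weightsD[OF Q]
  have nn: "0 \<le> p i * Q i j * h" if "0 \<le> h" for i j and h :: real
    using pw Qw that by simp
  have s1: "summable (\<lambda>j. p i * Q i j * h i j)" if "\<And>i j. 0 \<le> h i j" "\<And>i j. h i j \<le> 1"
    for i and h :: "nat \<Rightarrow> nat \<Rightarrow> real"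
    using summable_mult[OF comb_summ[OF Q, of "h i" 1], of "p i"] that by (simp add: mult.assoc)
  have sm: "(\<Sum>j. p i * Q i j * h i j) = p i * (\<Sum>j. Q i j * h i j)"
     if "\<And>i j. 0 \<le> h i j" "\<And>i j. h i j \<le> 1" for i and h :: "nat \<Rightarrow> nat \<Rightarrow> real"
    using suminf_mult[OF comb_summ[OF Q, of "h i" 1], of "p i"] that by (simp add: mult.assoc)
  have s2: "summable (\<lambda>i. \<Sum>j. p i * Q i j * h i j)" if "\<And>i j. 0 \<le> h i j" "\<And>i j. h i j \<le> 1"
    for h :: "nat \<Rightarrow> nat \<Rightarrow> real"
  proof -
    have eq: "(\<lambda>i. \<Sum>j. p i * Q i j * h i j) = (\<lambda>i. p i * (\<Sum>j. Q i j * h i j))"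
      using sm[where h=h, OF that] by auto
    have "summable (\<lambda>i. p i * (\<Sum>j. Q i j * h i j))"
    proof (rule comb_summ[OF p, of _ 1])
      fix i
      show "0 \<le> (\<Sum>j. Q i j * h i j)" using comb_nn[OF Q, of "\<lambda>j _. h i j" undefined 1] that
        by (simp add: comb_def)
      show "(\<Sum>j. Q i j * h i j) \<le> 1" using comb_le[OF Q, of "\<lambda>j _. h i j" undefined 1] that
        by (simp add: comb_def)
    qed
    then show ?thesis using eq by simp
  qed
  have key: "(\<Sum>n. w n * h (fst (prod_decode n)) (snd (prod_decode n))) = (\<Sum>i. p i * (\<Sum>j. Q i j * h i j))"
    and keys: "summable (\<lambda>n. w n * h (fst (prod_decode n)) (snd (prod_decode n)))"
    if "\<And>i j. 0 \<le> h i j" "\<And>i j. h i j \<le> 1" for h :: "nat \<Rightarrow> nat \<Rightarrow> real"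
  proof -
    have "(\<Sum>n. p (fst (prod_decode n)) * Q (fst (prod_decode n)) (snd (prod_decode n)) * h (fst (prod_decode n)) (snd (prod_decode n)))
        = (\<Sum>i. \<Sum>j. p i * Q i j * h i j)"
      by (rule reindex_nat(2)[of "\<lambda>i j. p i * Q i j * h i j"]) (use nn that s1 s2 in auto)
    then show "(\<Sum>n. w n * h (fst (prod_decode n)) (snd (prod_decode n))) = (\<Sum>i. p i * (\<Sum>j. Q i j * h i j))"
      unfolding w_def using sm[where h=h, OF that] by simp
    show "summable (\<lambda>n. w n * h (fst (prod_decode n)) (snd (prod_decode n)))"
      unfolding w_def
      by (rule reindex_nat(1)[of "\<lambda>i j. p i * Q i j * h i j"]) (use nn that s1 s2 in auto)
  qed
  have "(\<Sum>n. w n) = (\<Sum>i. p i * (\<Sum>j. Q i j))" and "summable w"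
    using key[of "\<lambda>_ _. 1"] keys[of "\<lambda>_ _. 1"] by auto
  moreover have "(\<Sum>i. p i * (\<Sum>j. Q i j)) \<le> (\<Sum>i. p i)"
  proof (rule suminf_le)
    have "0 \<le> suminf (Q i)" for i using Qw suminf_nonneg by metis
    then show "summable (\<lambda>i. p i * (\<Sum>j. Q i j))"
      using comb_summ[OF p, of "\<lambda>i. suminf (Q i)" 1] Qw by auto
    show "p i * (\<Sum>j. Q i j) \<le> p i" for i using pw Qw by (simp add: mult_left_le)
  qed (use pw in auto)
  moreover have "0 \<le> w n" for n unfolding w_def using pw Qw by simp
  ultimately show "weights w" using pw by (auto simp: weights_def)
  show "comb p (\<lambda>i. comb (Q i) (g i)) = comb w (\<lambda>n. g (fst (prod_decode n)) (snd (prod_decode n)))"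
    unfolding comb_def using key[of "\<lambda>i j. g i j _"] g by (auto intro!: ext)
qed

definition fb :: "'a dist \<Rightarrow> bool" where
  "fb \<mu> \<longleftrightarrow> (\<forall>s. 0 \<le> \<mu> s) \<and> (\<forall>F. finite F \<longrightarrow> sum \<mu> F \<le> 1)"

lemma fb_dirac: "fb (dirac E)"
  unfolding fb_def dirac_def by (auto simp: sum.If_cases)

lemma Rep_prob_bounds: "0 < Rep_prob p" "Rep_prob p < 1"
  using Rep_prob[of p] by auto

lemma pstep_fb: "pstep P \<mu> \<Longrightarrow> fb \<mu>"
proof (induction rule: pstep.induct)
  case (1 E) then show ?case by (rule fb_dirac)
next
  case (2 P \<mu> Q \<nu> p)
  have r: "0 < Rep_prob p" "Rep_prob p < 1" by (rule Rep_prob_bounds)+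
  show ?case unfolding fb_def
  proof (intro conjI allI impI)
    fix s show "0 \<le> Rep_prob p * \<mu> s + (1 - Rep_prob p) * \<nu> s"
      using 2 r unfolding fb_def by simp
  next
    fix F :: "'a nexp set" assume "finite F"
    have "sum (\<lambda>s. Rep_prob p * \<mu> s + (1 - Rep_prob p) * \<nu> s) F
        = Rep_prob p * sum \<mu> F + (1 - Rep_prob p) * sum \<nu> F"
      by (simp add: sum.distrib sum_distrib_left)
    also have "\<dots> \<le> Rep_prob p * 1 + (1 - Rep_prob p) * 1"
      using 2 r \<open>finite F\<close> unfolding fb_def by (intro add_mono mult_left_mono) auto
    finally show "sum (\<lambda>s. Rep_prob p * \<mu> s + (1 - Rep_prob p) * \<nu> s) F \<le> 1" by simp
  qed
qed

lemma ntrans_fb: "ntrans E a \<mu> \<Longrightarrow> fb \<mu>"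
  by (induction rule: ntrans.induct) (auto intro: pstep_fb)

lemma fb_nn: "fb \<mu> \<Longrightarrow> 0 \<le> \<mu> s" and fb_le1: "fb \<mu> \<Longrightarrow> \<mu> s \<le> 1"
  unfolding fb_def using sum.insert[of "{}" s \<mu>] by auto

lemma fb_summable: "fb \<mu> \<Longrightarrow> \<mu> summable_on UNIV"
  by (rule nonneg_bdd_above_summable_on) (auto simp: fb_def bdd_above_def)

lemma fb_infsum: "fb \<mu> \<Longrightarrow> infsum \<mu> UNIV \<le> 1"
  by (rule infsum_le_finite_sums[OF fb_summable]) (auto simp: fb_def)

lemma sum_le_infsum_nn:
  fixes f :: "'b \<Rightarrow> real"
  assumes "f summable_on UNIV" "\<And>s. 0 \<le> f s" "finite F"
  shows "sum f F \<le> infsum f UNIV"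
  using infsum_mono_neutral[of f F f UNIV] assms by auto

lemma NF:
  assumes "ctrans \<mu> a \<mu>'"
  shows "\<exists>q e t. weights q \<and> (\<forall>j. closed (e j) \<and> ntrans (e j) a (t j))
     \<and> \<mu> = comb q (\<lambda>j. dirac (e j)) \<and> \<mu>' = comb q t"
  using assms
proof (induction rule: ctrans.induct)
  case (base E a \<mu>)
  have 1: "dirac E = comb unitw (\<lambda>j. dirac E)" by (simp only: comb_unit)
  have 2: "\<mu> = comb unitw (\<lambda>j. \<mu>)" by (simp only: comb_unit)
  show ?case
    by (rule exI[of _ unitw], rule exI[of _ "\<lambda>_. E"], rule exI[of _ "\<lambda>_. \<mu>"])
      (use base unit_weights 1 2 in blast)
next
  case (comb p \<nu> a \<mu>)
  then have "\<forall>i. \<exists>x. weights (fst x) \<and> (\<forall>j. closed (fst (snd x) j) \<and> ntrans (fst (snd x) j) a (snd (snd x) j))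
     \<and> \<nu> i = comb (fst x) (\<lambda>j. dirac (fst (snd x) j)) \<and> \<mu> i = comb (fst x) (snd (snd x))"
    by auto
  then obtain X where X: "\<And>i. weights (fst (X i)) \<and> (\<forall>j. closed (fst (snd (X i)) j) \<and> ntrans (fst (snd (X i)) j) a (snd (snd (X i)) j))
     \<and> \<nu> i = comb (fst (X i)) (\<lambda>j. dirac (fst (snd (X i)) j)) \<and> \<mu> i = comb (fst (X i)) (snd (snd (X i)))"
    by metis
  define Q where "Q i = fst (X i)" for i
  define E where "E i = fst (snd (X i))" for i
  define T where "T i = snd (snd (X i))" for i
  have Qw: "weights (Q i)" for i using X Q_def by auto
  have ET: "closed (E i j) \<and> ntrans (E i j) a (T i j)" for i j using X E_def T_def by auto
  have nu: "\<nu> = (\<lambda>i. comb (Q i) (\<lambda>j. dirac (E i j)))" using X Q_def E_def by auto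
  have mu: "\<mu> = (\<lambda>i. comb (Q i) (T i))" using X Q_def T_def by auto
  define w where "w \<equiv> \<lambda>n. p (fst (prod_decode n)) * Q (fst (prod_decode n)) (snd (prod_decode n))"
  have T01: "0 \<le> T i j s" "T i j s \<le> 1" for i j s using ET ntrans_fb fb_nn fb_le1 by metis+
  show ?case
  proof (intro exI conjI allI)
    show "weights w" unfolding w_def by (rule comb_comb(1)[OF comb(1) Qw, of "\<lambda>i j. dirac (E i j)"]) auto
    show "comb p \<nu> = comb w (\<lambda>n. dirac (E (fst (prod_decode n)) (snd (prod_decode n))))"
      unfolding w_def nu by (rule comb_comb(2)[OF comb(1) Qw]) auto
    show "comb p \<mu> = comb w (\<lambda>n. T (fst (prod_decode n)) (snd (prod_decode n)))"
      unfolding w_def mu by (rule comb_comb(2)[OF comb(1) Qw]) (use T01 in auto)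
  qed (use ET in auto)
qed

lemma partial_le_comb:
  assumes "weights q"
  shows "sum (\<lambda>j. q j * dirac (e j) s) {..<n} \<le> comb q (\<lambda>j. dirac (e j)) s"
  unfolding comb_def
  by (rule sum_le_suminf) (use assms comb_summ[OF assms, of "\<lambda>j. dirac (e j) s" 1] weightsD[OF assms] in auto)

lemma weights_le_mass:
  assumes q: "weights q" and S: "comb q (\<lambda>j. dirac (e j)) summable_on UNIV"
  shows "suminf q \<le> infsum (comb q (\<lambda>j. dirac (e j))) UNIV"
proof (rule suminf_le_const[OF weightsD(2)[OF q]])
  fix n
  let ?M = "comb q (\<lambda>j. dirac (e j))"
  have "sum q {..<n} = (\<Sum>s\<in>e ` {..<n}. sum q {j\<in>{..<n}. e j = s})"
    by (rule sum.image_gen) auto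
  also have "\<dots> \<le> (\<Sum>s\<in>e ` {..<n}. ?M s)"
  proof (rule sum_mono)
    fix s
    have "sum q {j\<in>{..<n}. e j = s} = sum (\<lambda>j. q j * dirac (e j) s) {..<n}"
      using sum.inter_filter[of "{..<n}" q "\<lambda>j. e j = s", symmetric]
      by (simp add: dirac_def eq_commute if_distrib cong: if_cong)
    also have "\<dots> \<le> ?M s" by (rule partial_le_comb[OF q])
    finally show "sum q {j\<in>{..<n}. e j = s} \<le> ?M s" .
  qed
  also have "\<dots> \<le> infsum ?M UNIV"
    by (rule sum_le_infsum_nn[OF S]) (use comb_nn[OF q, of "\<lambda>j. dirac (e j)" _ 1] in auto)
  finally show "sum q {..<n} \<le> infsum ?M UNIV" .
qed

lemma ctrans_mass:
  assumes "ctrans \<mu> a \<mu>'" "\<mu> summable_on UNIV"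
  shows "(\<forall>s. 0 \<le> \<mu>' s) \<and> \<mu>' summable_on UNIV \<and> infsum \<mu>' UNIV \<le> infsum \<mu> UNIV"
proof -
  obtain q e t where q: "weights q" and et: "\<And>j. closed (e j) \<and> ntrans (e j) a (t j)"
    and mu: "\<mu> = comb q (\<lambda>j. dirac (e j))" and mu': "\<mu>' = comb q t"
    using NF[OF assms(1)] by blast
  have tfb: "fb (t j)" for j using et ntrans_fb by blast
  have nn: "0 \<le> \<mu>' s" for s unfolding mu' by (rule comb_nn[OF q, of _ _ 1]) (use tfb in \<open>auto intro: fb_nn fb_le1\<close>)
  have fin: "sum \<mu>' F \<le> suminf q" if "finite F" for F
  proof -
    have sm: "summable (\<lambda>j. q j * t j s)" for s
      by (rule comb_summ[OF q, of _ 1]) (use tfb in \<open>auto intro: fb_nn fb_le1\<close>)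
    have "sum \<mu>' F = (\<Sum>j. \<Sum>s\<in>F. q j * t j s)"
      unfolding mu' comb_def by (rule suminf_sum[symmetric]) (use sm in auto)
    also have "\<dots> \<le> (\<Sum>j. q j)"
    proof (rule suminf_le)
      show "(\<Sum>s\<in>F. q j * t j s) \<le> q j" for j
        using tfb[of j] that weightsD(1)[OF q, of j] unfolding fb_def
        by (simp add: sum_distrib_left[symmetric] mult_left_le)
      show "summable (\<lambda>j. \<Sum>s\<in>F. q j * t j s)" using sm by (rule summable_sum)
    qed (use q weightsD in auto)
    finally show ?thesis .
  qed
  have S: "\<mu>' summable_on UNIV"
    by (rule nonneg_bdd_above_summable_on) (use nn fin in \<open>auto simp: bdd_above_def\<close>)
  have "infsum \<mu>' UNIV \<le> suminf q" by (rule infsum_le_finite_sums[OF S]) (use fin in auto)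
  also have "\<dots> \<le> infsum \<mu> UNIV" unfolding mu by (rule weights_le_mass[OF q]) (use assms(2) mu in auto)
  finally show ?thesis using nn S by auto
qed

lemma subdist_nn: "subdist \<mu> \<Longrightarrow> 0 \<le> \<mu> s"
  by (simp add: subdist_def)

lemma subdist_le1: "subdist \<mu> \<Longrightarrow> \<mu> s \<le> 1"
  unfolding subdist_def using sum_le_infsum_nn[of \<mu> "{s}"] by force

lemma subdist_dirac: "closed E \<Longrightarrow> subdist (dirac E)"
  unfolding subdist_def using fb_dirac[of E] fb_summable fb_infsum
  by (auto simp: dirac_def)

lemma zero_weights: "weights (\<lambda>_. 0)" by (simp add: weights_def)

lemma comb_zero: "comb (\<lambda>_. 0) f = (\<lambda>_. 0)" by (simp add: comb_def)

lemma subdist_zero: "subdist (\<lambda>_. 0)" by (simp add: subdist_def)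

lemma subdist_comb:
  assumes p: "weights p" and f: "\<And>j. subdist (f j)"
  shows "subdist (comb p f)"
proof -
  have nn: "0 \<le> comb p f s" for s by (rule comb_nn[OF p, of _ _ 1]) (use f in \<open>auto intro: subdist_nn subdist_le1\<close>)
  have fin: "sum (comb p f) F \<le> 1" if "finite F" for F
  proof -
    have sm: "summable (\<lambda>j. p j * f j s)" for s
      by (rule comb_summ[OF p, of _ 1]) (use f in \<open>auto intro: subdist_nn subdist_le1\<close>)
    have "sum (comb p f) F = (\<Sum>j. \<Sum>s\<in>F. p j * f j s)"
      unfolding comb_def by (rule suminf_sum[symmetric]) (use sm in auto)
    also have "\<dots> \<le> (\<Sum>j. p j)"
    proof (rule suminf_le)
      fix j
      have "sum (f j) F \<le> infsum (f j) UNIV"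
        by (rule sum_le_infsum_nn) (use f[of j] that in \<open>auto simp: subdist_def\<close>)
      also have "\<dots> \<le> 1" using f[of j] by (simp add: subdist_def)
      finally show "(\<Sum>s\<in>F. p j * f j s) \<le> p j"
        using weightsD(1)[OF p, of j] by (simp add: sum_distrib_left[symmetric] mult_left_le)
      show "summable (\<lambda>j. \<Sum>s\<in>F. p j * f j s)" using sm by (rule summable_sum)
    qed (use p weightsD in auto)
    also have "\<dots> \<le> 1" using weightsD(3)[OF p] .
    finally show ?thesis .
  qed
  have S: "comb p f summable_on UNIV"
    by (rule nonneg_bdd_above_summable_on) (use nn fin in \<open>auto simp: bdd_above_def\<close>)
  have "infsum (comb p f) UNIV \<le> 1" by (rule infsum_le_finite_sums[OF S]) (use fin in auto)
  moreover have "comb p f s = 0" if "\<not> closed s" for s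
    using f that by (simp add: comb_def subdist_def)
  ultimately show ?thesis using nn S by (auto simp: subdist_def)
qed

lemma deriv_summable:
  assumes d: "derivation mto mx"
  shows "summable (\<lambda>i. mx i s) \<and> (\<Sum>i. mx i s) \<le> 2 \<and> 0 \<le> (\<Sum>i. mx i s)"
proof -
  define m where "m f = infsum f UNIV" for f :: "'a dist"
  have sd: "subdist (mto i)" "subdist (mx i)" for i using d by (auto simp: derivation_def)
  have tr: "ctrans (mto i) Tau (\<lambda>s. mto (Suc i) s + mx (Suc i) s)" for i
    using d by (auto simp: derivation_def)
  have S: "f summable_on UNIV" "0 \<le> m f" "m f \<le> 1" if "subdist f" for f
    using that by (auto simp: subdist_def m_def intro: infsum_nonneg)
  have claim: "(\<Sum>i<Suc n. m (mx i)) + m (mto n) \<le> m (mto 0) + m (mx 0)" for n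
  proof (induction n)
    case 0 then show ?case by simp
  next
    case (Suc n)
    have "m (\<lambda>s. mto (Suc n) s + mx (Suc n) s) \<le> m (mto n)"
      using ctrans_mass[OF tr[of n] S(1)[OF sd(1)]] m_def by simp
    moreover have "m (\<lambda>s. mto (Suc n) s + mx (Suc n) s) = m (mto (Suc n)) + m (mx (Suc n))"
      unfolding m_def by (rule infsum_add) (use S sd in auto)
    ultimately show ?case using Suc by simp
  qed
  have ps: "(\<Sum>i<n. mx i s) \<le> 2" for n
  proof -
    have "(\<Sum>i<n. mx i s) \<le> (\<Sum>i<n. m (mx i))"
      unfolding m_def by (intro sum_mono sum_le_infsum_nn[of _ "{s}", simplified]) (use S sd in \<open>auto intro: subdist_nn\<close>)
    also have "\<dots> \<le> (\<Sum>i<Suc n. m (mx i))" by (rule sum_mono2) (use S sd in auto)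
    also have "\<dots> \<le> m (mto 0) + m (mx 0)" using claim[of n] S(2)[OF sd(1)[of n]] by linarith
    also have "\<dots> \<le> 2" using S(3)[OF sd(1)[of 0]] S(3)[OF sd(2)[of 0]] by linarith
    finally show ?thesis .
  qed
  have sm: "summable (\<lambda>i. mx i s)" by (rule summableI_nonneg_bounded[of _ 2]) (use sd ps in \<open>auto intro: subdist_nn\<close>)
  then show ?thesis using suminf_le_const[OF sm ps] suminf_nonneg[OF sm] sd subdist_nn by blast
qed

lemma closed_tau0: "closed (Pref a (Dirac Nil))"
  by (simp add: closed_def)

lemma ctrans_zero: "ctrans (\<lambda>_. 0) a (\<lambda>_. 0)"
proof -
  have "ctrans (dirac (Pref a (Dirac Nil))) a (dirac Nil)"
    by (rule ctrans.base[OF closed_tau0]) (intro ntrans.intros pstep.intros)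
  then have "ctrans (comb (\<lambda>_. 0) (\<lambda>_. dirac (Pref a (Dirac Nil)))) a (comb (\<lambda>_. 0) (\<lambda>_. dirac Nil))"
    by (intro ctrans.comb zero_weights) auto
  then show ?thesis by (simp add: comb_zero)
qed

lemma weak_refl: assumes "subdist \<mu>" shows "weak \<mu> \<mu>"
proof -
  define mx where "mx = (\<lambda>i::nat. if i = 0 then \<mu> else (\<lambda>_. 0))"
  have "derivation (\<lambda>_. (\<lambda>_. 0)) mx"
    unfolding derivation_def mx_def using assms subdist_zero ctrans_zero by auto
  moreover have "\<mu> = (\<lambda>s. \<Sum>i. mx i s)"
    by (rule ext, subst suminf_finite[of "{0}"]) (auto simp: mx_def)
  ultimately show ?thesis unfolding weak_def by (intro exI[of _ "\<lambda>_. (\<lambda>_. 0)"] exI[of _ mx]) (auto simp: mx_def)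
qed

lemma weak_comb:
  assumes p: "weights p" and w: "\<And>j. weak (\<mu> j) (\<nu> j)"
  shows "weak (comb p \<mu>) (comb p \<nu>)"
proof -
  define P where "P j m x \<longleftrightarrow> derivation m x \<and> \<mu> j = (\<lambda>s. m 0 s + x 0 s) \<and> \<nu> j = (\<lambda>s. \<Sum>i. x i s)" for j m x
  define TO where "TO j = (SOME m. \<exists>x. P j m x)" for j
  define TX where "TX j = (SOME x. P j (TO j) x)" for j
  have P1: "\<exists>x. P j (TO j) x" for j
  proof -
    have "\<exists>m x. P j m x" using w[of j] by (simp add: weak_def P_def)
    then show ?thesis unfolding TO_def by (rule someI_ex[of "\<lambda>m. \<exists>x. P j m x"])
  qed
  have P2: "P j (TO j) (TX j)" for j
    unfolding TX_def by (rule someI_ex[of "\<lambda>x. P j (TO j) x"]) (rule P1)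
  have D: "derivation (TO j) (TX j)" for j using P2[of j] unfolding P_def by blast
  have mu: "\<mu> j = (\<lambda>s. TO j 0 s + TX j 0 s)" for j using P2[of j] unfolding P_def by blast
  have nu: "\<nu> j = (\<lambda>s. \<Sum>i. TX j i s)" for j using P2[of j] unfolding P_def by blast
  have sd: "subdist (TO j i)" "subdist (TX j i)" for i j using D by (auto simp: derivation_def)
  have tr: "ctrans (TO j i) Tau (\<lambda>s. TO j (Suc i) s + TX j (Suc i) s)" for i j
    using D by (auto simp: derivation_def)
  define mto where "mto i = comb p (\<lambda>j. TO j i)" for i
  define mx where "mx i = comb p (\<lambda>j. TX j i)" for i
  have add: "comb p (\<lambda>j s. TO j i s + TX j i s) = (\<lambda>s. mto i s + mx i s)" for i
    unfolding mto_def mx_def by (rule comb_add[OF p]) (use sd in \<open>auto intro: subdist_nn subdist_le1\<close>)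
  have "derivation mto mx"
    unfolding derivation_def
  proof (intro conjI allI)
    show "subdist (mto i)" "subdist (mx i)" for i
      unfolding mto_def mx_def by (rule subdist_comb[OF p], rule sd)+
    show "ctrans (mto i) Tau (\<lambda>s. mto (Suc i) s + mx (Suc i) s)" for i
      unfolding add[symmetric] unfolding mto_def by (rule ctrans.comb[OF p]) (use tr in auto)
  qed
  moreover have "comb p \<mu> = (\<lambda>s. mto 0 s + mx 0 s)"
  proof -
    have "\<mu> = (\<lambda>j s. TO j 0 s + TX j 0 s)" by (rule ext) (rule mu)
    then show ?thesis using add[of 0] by simp
  qed
  moreover have "comb p \<nu> = (\<lambda>s. \<Sum>i. mx i s)"
  proof
    fix s
    have ds: "summable (\<lambda>i. TX j i s)" "(\<Sum>i. TX j i s) \<le> 2" "0 \<le> (\<Sum>i. TX j i s)" for j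
      using deriv_summable[OF D[of j], of s] by auto
    have nn: "0 \<le> p j * TX j i s" for i j using weightsD(1)[OF p, of j] subdist_nn[OF sd(2)[of j i], of s] by simp
    have s1: "summable (\<lambda>i. p j * TX j i s)" for j using ds(1) by (rule summable_mult)
    have eq: "(\<Sum>i. p j * TX j i s) = p j * (\<Sum>i. TX j i s)" for j using ds(1) by (rule suminf_mult)
    have s2: "summable (\<lambda>j. \<Sum>i. p j * TX j i s)"
      unfolding eq by (rule comb_summ[OF p, of _ 2]) (use ds in auto)
    have "comb p \<nu> s = (\<Sum>j. \<Sum>i. p j * TX j i s)"
      unfolding comb_def nu eq by simp
    also have "\<dots> = (\<Sum>i. \<Sum>j. p j * TX j i s)"
      by (rule swap_nat(1)[OF nn s1 s2])
    also have "\<dots> = (\<Sum>i. mx i s)" unfolding mx_def comb_def by simp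
    finally show "comb p \<nu> s = (\<Sum>i. mx i s)" .
  qed
  ultimately show ?thesis unfolding weak_def by blast
qed

lemma wtrans_comb:
  assumes p: "weights p" and w: "\<And>j. wtrans (\<mu> j) a (\<nu> j)"
  shows "wtrans (comb p \<mu>) a (comb p \<nu>)"
proof -
  have "\<forall>j. \<exists>x. weak (\<mu> j) (fst x) \<and> ctrans (fst x) a (snd x) \<and> weak (snd x) (\<nu> j)"
    using w unfolding wtrans_def by auto
  then obtain X where X: "\<And>j. weak (\<mu> j) (fst (X j)) \<and> ctrans (fst (X j)) a (snd (X j)) \<and> weak (snd (X j)) (\<nu> j)"
    by metis
  have "weak (comb p \<mu>) (comb p (\<lambda>j. fst (X j)))" by (rule weak_comb[OF p]) (use X in auto)
  moreover have "ctrans (comb p (\<lambda>j. fst (X j))) a (comb p (\<lambda>j. snd (X j)))"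
    by (rule ctrans.comb[OF p]) (use X in auto)
  moreover have "weak (comb p (\<lambda>j. snd (X j))) (comb p \<nu>)" by (rule weak_comb[OF p]) (use X in auto)
  ultimately show ?thesis unfolding wtrans_def by blast
qed

lemma wtrans_zero: "wtrans (\<lambda>_. 0) a (\<lambda>_. 0)"
  unfolding wtrans_def using weak_refl[OF subdist_zero] ctrans_zero by blast

lemma lift_subdist:
  assumes "\<And>E F. R E F \<Longrightarrow> closed E \<and> closed F" "lift R \<mu> \<nu>"
  shows "subdist \<mu> \<and> subdist \<nu>"
  using assms(2)
proof (induction rule: lift.induct)
  case (base E F) then show ?case using assms(1) subdist_dirac by blast
next
  case (comb p \<mu> \<nu>) then show ?case using subdist_comb by blast
qed

lemma lift_zero: "R E F \<Longrightarrow> lift R (\<lambda>_. 0) (\<lambda>_. 0)"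
  using lift.comb[OF zero_weights, of R "\<lambda>_. dirac E" "\<lambda>_. dirac F"] lift.base[of R E F]
  by (simp add: comb_zero)

lemma wbisim_Nil: "wbisim Nil Nil"
proof -
  have "weak_bisimulation (\<lambda>E F. E = Nil \<and> F = Nil)"
    unfolding weak_bisimulation_def by (auto simp: closed_def elim: ntrans.cases)
  then show ?thesis unfolding wbisim_def by blast
qed

lemma lift_wbisim_zero: "lift wbisim (\<lambda>_. 0) (\<lambda>_. 0)"
  by (rule lift_zero[of wbisim nexp.Nil nexp.Nil, OF wbisim_Nil])

lemma comb_single_le:
  assumes p: "weights p" and f: "\<And>i. 0 \<le> f i s" "\<And>i. f i s \<le> 1"
  shows "p i * f i s \<le> comb p f s"
  unfolding comb_def
  by (rule single_le_suminf) (use comb_summ[OF p, of "\<lambda>i. f i s" 1] f weightsD(1)[OF p] in auto)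

lemma base_case:
  assumes wc: "wcong F E" and tr: "ctrans (dirac E) a \<mu>'"
  shows "\<exists>\<nu>'. wtrans (dirac F) a \<nu>' \<and> lift wbisim \<nu>' \<mu>'"
proof -
  obtain q e t where q: "weights q" and et: "\<And>j. closed (e j) \<and> ntrans (e j) a (t j)"
    and mu: "dirac E = comb q (\<lambda>j. dirac (e j))" and mu': "\<mu>' = comb q t"
    using NF[OF tr] by blast
  have eE: "e j = E" if "q j \<noteq> 0" for j
  proof -
    have "q j * dirac (e j) (e j) \<le> comb q (\<lambda>j. dirac (e j)) (e j)"
      by (rule comb_single_le[OF q]) auto
    then have "q j \<le> dirac E (e j)" using mu by (simp add: dirac_def)
    then show ?thesis using that weightsD(1)[OF q, of j] by (auto simp: dirac_def split: if_splits)
  qed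
  have "1 = comb q (\<lambda>j. dirac (e j)) E" using mu by (metis dirac_def)
  also have "\<dots> = suminf q"
    unfolding comb_def
  proof (rule arg_cong[where f=suminf], rule ext)
    fix j show "q j * dirac (e j) E = q j" using eE[of j] by (cases "q j = 0") (auto simp: dirac_def)
  qed
  finally have sq: "suminf q = 1" by simp
  have "\<forall>j. \<exists>\<nu>. q j \<noteq> 0 \<longrightarrow> wtrans (dirac F) a \<nu> \<and> lift wbisim \<nu> (t j)"
    using wc et eE unfolding wcong_def by metis
  then obtain V where V: "\<And>j. q j \<noteq> 0 \<Longrightarrow> wtrans (dirac F) a (V j) \<and> lift wbisim (V j) (t j)"
    by metis
  define V' where "V' j = (if q j \<noteq> 0 then V j else (\<lambda>_. 0))" for j
  define T' where "T' j = (if q j \<noteq> 0 then t j else (\<lambda>_. 0))" for j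
  define D where "D j = (if q j \<noteq> 0 then dirac F else (\<lambda>_. 0))" for j
  have "comb q (\<lambda>_. dirac F) = dirac F" using comb_const[OF q, of "dirac F"] sq by simp
  then have "dirac F = comb q (\<lambda>_. dirac F)" by simp
  also have "\<dots> = comb q D" by (rule comb_cong) (simp add: D_def)
  finally have dF: "dirac F = comb q D" .
  have m': "\<mu>' = comb q T'" unfolding mu' by (rule comb_cong) (simp add: T'_def)
  have "wtrans (comb q D) a (comb q V')"
    by (rule wtrans_comb[OF q]) (use V wtrans_zero in \<open>auto simp: D_def V'_def\<close>)
  moreover have "lift wbisim (comb q V') (comb q T')"
    by (rule lift.comb[OF q]) (use V lift_wbisim_zero in \<open>auto simp: T'_def V'_def\<close>)
  ultimately show ?thesis using dF m' by auto
qed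

lemma filter_le_comb:
  assumes q: "weights q"
  shows "sum q {j\<in>{..<n}. e j = s} \<le> comb q (\<lambda>j. dirac (e j)) s"
proof -
  have "sum q {j\<in>{..<n}. e j = s} = sum (\<lambda>j. q j * dirac (e j) s) {..<n}"
    using sum.inter_filter[of "{..<n}" q "\<lambda>j. e j = s", symmetric]
    by (simp add: dirac_def eq_commute if_distrib cong: if_cong)
  also have "\<dots> \<le> comb q (\<lambda>j. dirac (e j)) s" by (rule partial_le_comb[OF q])
  finally show ?thesis .
qed

lemma ctrans_decomp:
  assumes p: "weights p" and sd: "\<And>i. subdist (\<mu> i)" and tr: "ctrans (comb p \<mu>) a \<mu>'"
  shows "\<exists>\<mu>''. (\<forall>i. p i \<noteq> 0 \<longrightarrow> ctrans (\<mu> i) a (\<mu>'' i)) \<and> \<mu>' = comb p \<mu>''"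
proof -
  obtain q e t where q: "weights q" and et: "\<And>j. closed (e j) \<and> ntrans (e j) a (t j)"
    and mu: "comb p \<mu> = comb q (\<lambda>j. dirac (e j))" and mu': "\<mu>' = comb q t"
    using NF[OF tr] by blast
  define M where "M = comb p \<mu>"
  have Mq: "M = comb q (\<lambda>j. dirac (e j))" using mu M_def by simp
  have mnn: "0 \<le> \<mu> i s" "\<mu> i s \<le> 1" for i s using sd subdist_nn subdist_le1 by blast+
  have Mnn: "0 \<le> M s" for s unfolding M_def by (rule comb_nn[OF p, of _ _ 1]) (use mnn in auto)
  have f1: "p i * \<mu> i s \<le> M s" for i s unfolding M_def by (rule comb_single_le[OF p]) (use mnn in auto)
  have f2: "q j \<le> M (e j)" for j
    using comb_single_le[OF q, of "\<lambda>j. dirac (e j)" "e j" j] unfolding Mq by (simp add: dirac_def)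
  have qnn: "0 \<le> q j" for j using weightsD(1)[OF q] .
  have pnn: "0 \<le> p i" for i using weightsD(1)[OF p] .
  have tb: "0 \<le> t j s" "t j s \<le> 1" for j s using et ntrans_fb fb_nn fb_le1 by metis+
  define r where "r i j = (if p i = 0 \<or> M (e j) = 0 then 0 else q j * \<mu> i (e j) / M (e j))" for i j
  have rnn: "0 \<le> r i j" for i j unfolding r_def using qnn mnn Mnn by simp
  have rw: "weights (r i)" for i
  proof (cases "p i = 0")
    case True
    then have "r i = (\<lambda>_. 0)" by (auto simp: r_def)
    then show ?thesis using zero_weights by simp
  next
    case False
    then have pp: "0 < p i" using pnn[of i] by simp
    have rle: "r i j \<le> q j * (1 / p i)" for j
    proof (cases "M (e j) = 0")
      case True then show ?thesis using qnn pp by (simp add: r_def)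
    next
      case False
      then have Mp: "0 < M (e j)" using Mnn[of "e j"] by simp
      have "\<mu> i (e j) / M (e j) \<le> 1 / p i"
        using f1[of i "e j"] pp Mp by (simp add: divide_simps mult.commute)
      then have "q j * (\<mu> i (e j) / M (e j)) \<le> q j * (1 / p i)"
        by (rule mult_left_mono) (rule qnn)
      then show ?thesis using \<open>p i \<noteq> 0\<close> False by (simp add: r_def)
    qed
    have "summable (\<lambda>j. q j * (1 / p i))" using summable_mult2[OF weightsD(2)[OF q], of "1 / p i"] .
    then have sr: "summable (r i)"
      by (rule summable_comparison_test') (use rle rnn in auto)
    have ps: "sum (r i) {..<n} \<le> 1" for n
    proof -
      have "sum (r i) {..<n} = (\<Sum>s\<in>e ` {..<n}. sum (r i) {j\<in>{..<n}. e j = s})"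
        by (rule sum.image_gen) auto
      also have "\<dots> \<le> (\<Sum>s\<in>e ` {..<n}. \<mu> i s)"
      proof (rule sum_mono)
        fix s
        show "sum (r i) {j\<in>{..<n}. e j = s} \<le> \<mu> i s"
        proof (cases "M s = 0")
          case True
          then have "sum (r i) {j\<in>{..<n}. e j = s} = 0" by (auto simp: r_def intro!: sum.neutral)
          then show ?thesis using mnn by simp
        next
          case Ms: False
          have "sum (r i) {j\<in>{..<n}. e j = s} = sum (\<lambda>j. \<mu> i s / M s * q j) {j\<in>{..<n}. e j = s}"
            by (rule sum.cong) (use Ms \<open>p i \<noteq> 0\<close> in \<open>auto simp: r_def\<close>)
          also have "\<dots> = \<mu> i s / M s * sum q {j\<in>{..<n}. e j = s}"
            by (simp add: sum_distrib_left)
          also have "\<dots> \<le> \<mu> i s / M s * M s"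
            by (rule mult_left_mono) (use filter_le_comb[OF q, of n e s] Mq mnn Mnn in auto)
          also have "\<dots> = \<mu> i s" using Ms by simp
          finally show ?thesis .
        qed
      qed
      also have "\<dots> \<le> infsum (\<mu> i) UNIV"
        by (rule sum_le_infsum_nn) (use sd[of i] mnn in \<open>auto simp: subdist_def\<close>)
      also have "\<dots> \<le> 1" using sd[of i] by (simp add: subdist_def)
      finally show ?thesis .
    qed
    show ?thesis using sr ps rnn suminf_le_const[OF sr ps] by (auto simp: weights_def)
  qed
  have mui: "\<mu> i = comb (r i) (\<lambda>j. dirac (e j))" if "p i \<noteq> 0" for i
  proof
    fix s
    show "\<mu> i s = comb (r i) (\<lambda>j. dirac (e j)) s"
    proof (cases "M s = 0")
      case True
      then have "p i * \<mu> i s \<le> 0" using f1[of i s] by simp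
      then have "\<mu> i s = 0" using that pnn[of i] mnn[of i s]
        by (metis antisym mult_pos_pos not_less order_le_less)
      moreover have "comb (r i) (\<lambda>j. dirac (e j)) s = 0"
      proof -
        have "(\<lambda>j. r i j * dirac (e j) s) = (\<lambda>_. 0)" using True by (auto simp: r_def dirac_def)
        then show ?thesis unfolding comb_def by simp
      qed
      ultimately show ?thesis by simp
    next
      case Ms: False
      have h: "(\<lambda>j. r i j * dirac (e j) s) = (\<lambda>j. \<mu> i s / M s * (q j * dirac (e j) s))"
        using Ms that by (auto simp: r_def dirac_def)
      have "comb (r i) (\<lambda>j. dirac (e j)) s = (\<Sum>j. \<mu> i s / M s * (q j * dirac (e j) s))"
        by (simp only: comb_def h)
      also have "\<dots> = \<mu> i s / M s * (\<Sum>j. q j * dirac (e j) s)"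
        by (rule suminf_mult[OF comb_summ[OF q, of "\<lambda>j. dirac (e j) s" 1]]) auto
      also have "\<dots> = \<mu> i s / M s * comb q (\<lambda>j. dirac (e j)) s" by (simp only: comb_def)
      also have "\<dots> = \<mu> i s" using Ms Mq by simp
      finally show ?thesis by simp
    qed
  qed
  have ctr: "ctrans (\<mu> i) a (comb (r i) t)" if "p i \<noteq> 0" for i
    unfolding mui[OF that] by (rule ctrans.comb[OF rw]) (use et in \<open>auto intro: ctrans.base\<close>)
  have pr: "p i * r i j = (if M (e j) = 0 then 0 else q j / M (e j) * (p i * \<mu> i (e j)))" for i j
    by (auto simp: r_def)
  have spr: "summable (\<lambda>i. p i * r i j)" and spr2: "(\<Sum>i. p i * r i j) = q j" for j
  proof -
    have sm: "summable (\<lambda>i. p i * \<mu> i (e j))"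
      using comb_summ[OF p, of "\<lambda>i. \<mu> i (e j)" 1] mnn(1)[of _ "e j"] mnn(2)[of _ "e j"] by blast
    show "summable (\<lambda>i. p i * r i j)" unfolding pr
      by (cases "M (e j) = 0") (use summable_mult[OF sm, of "q j / M (e j)"] in auto)
    show "(\<Sum>i. p i * r i j) = q j"
    proof (cases "M (e j) = 0")
      case True
      have "q j = 0" using f2[of j] qnn[of j] True by linarith
      moreover have "(\<lambda>i. p i * r i j) = (\<lambda>_. 0)" using True by (simp add: r_def)
      ultimately show ?thesis by simp
    next
      case False
      have "(\<lambda>i. p i * r i j) = (\<lambda>i. q j / M (e j) * (p i * \<mu> i (e j)))"
        by (intro ext) (simp only: pr if_not_P[OF False])
      then have "(\<Sum>i. p i * r i j) = q j / M (e j) * (\<Sum>i. p i * \<mu> i (e j))"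
        using suminf_mult[OF sm, of "q j / M (e j)"] by simp
      moreover have "(\<Sum>i. p i * \<mu> i (e j)) = M (e j)" by (simp add: M_def comb_def)
      ultimately have "(\<Sum>i. p i * r i j) = q j / M (e j) * M (e j)" by simp
      then show ?thesis using False by simp
    qed
  qed
  have "comb p (\<lambda>i. comb (r i) t) = \<mu>'"
  proof
    fix s
    have srt: "summable (\<lambda>j. r i j * t j s)" for i by (rule comb_summ[OF rw, of _ 1]) (use tb in auto)
    have nn: "0 \<le> p i * (r i j * t j s)" for i j using pnn rnn tb by simp
    have s1: "summable (\<lambda>j. p i * (r i j * t j s))" for i using summable_mult[OF srt] by simp
    have e1: "(\<Sum>j. p i * (r i j * t j s)) = p i * comb (r i) t s" for i
      using suminf_mult[OF srt] by (simp add: comb_def)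
    have cb1: "0 \<le> comb (r i) t s" for i by (rule comb_nn[OF rw, of t s 1]) (auto intro: tb)
    have cb2: "comb (r i) t s \<le> 1" for i by (rule comb_le[OF rw, of t s 1]) (auto intro: tb)
    have s2: "summable (\<lambda>i. \<Sum>j. p i * (r i j * t j s))"
      unfolding e1 using comb_summ[OF p, of "\<lambda>i. comb (r i) t s" 1] cb1 cb2 by blast
    have "comb p (\<lambda>i. comb (r i) t) s = (\<Sum>i. \<Sum>j. p i * (r i j * t j s))"
      using e1 by (simp add: comb_def)
    also have "\<dots> = (\<Sum>j. \<Sum>i. p i * (r i j * t j s))" by (rule swap_nat(1)[OF nn s1 s2])
    also have "\<dots> = (\<Sum>j. q j * t j s)"
    proof (rule arg_cong[where f=suminf], rule ext)
      fix j
      have "(\<Sum>i. p i * (r i j * t j s)) = (\<Sum>i. p i * r i j * t j s)" by (simp add: mult.assoc)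
      also have "\<dots> = (\<Sum>i. p i * r i j) * t j s" using suminf_mult2[OF spr[of j]] by simp
      finally show "(\<Sum>i. p i * (r i j * t j s)) = q j * t j s" using spr2 by simp
    qed
    also have "\<dots> = \<mu>' s" unfolding mu' comb_def by simp
    finally show "comb p (\<lambda>i. comb (r i) t) s = \<mu>' s" .
  qed
  then show ?thesis using ctr by (intro exI[of _ "\<lambda>i. comb (r i) t"]) auto
qed

theorem mainTheorem13:
  fixes \<mu> \<mu>' \<nu> :: "'a dist" and a :: "'a act"
  assumes "lift wcong \<nu> \<mu>"
    and "ctrans \<mu> a \<mu>'"
  shows "\<exists>\<nu>'. wtrans \<nu> a \<nu>' \<and> lift wbisim \<nu>' \<mu>'"
  using assms
proof (induction arbitrary: \<mu>' rule: lift.induct)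
  case (base F E)
  then show ?case by (rule base_case)
next
  case (comb p \<nu> \<mu>)
  have sd: "subdist (\<mu> i)" for i
    using lift_subdist[of wcong "\<nu> i" "\<mu> i"] comb(2) by (auto simp: wcong_def)
  obtain m'' where m'': "\<And>i. p i \<noteq> 0 \<Longrightarrow> ctrans (\<mu> i) a (m'' i)" and eq: "\<mu>' = comb p m''"
    using ctrans_decomp[OF comb(1) sd comb(3)] by blast
  have "\<forall>i. \<exists>n. p i \<noteq> 0 \<longrightarrow> wtrans (\<nu> i) a n \<and> lift wbisim n (m'' i)"
    using comb(2) m'' by blast
  then obtain N where N: "\<And>i. p i \<noteq> 0 \<Longrightarrow> wtrans (\<nu> i) a (N i) \<and> lift wbisim (N i) (m'' i)"
    by metis
  define N' where "N' i = (if p i \<noteq> 0 then N i else (\<lambda>_. 0))" for i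
  define M' where "M' i = (if p i \<noteq> 0 then m'' i else (\<lambda>_. 0))" for i
  define V where "V i = (if p i \<noteq> 0 then \<nu> i else (\<lambda>_. 0))" for i
  have "comb p \<nu> = comb p V" by (rule comb_cong) (simp add: V_def)
  moreover have "\<mu>' = comb p M'" unfolding eq by (rule comb_cong) (simp add: M'_def)
  moreover have "wtrans (comb p V) a (comb p N')"
    by (rule wtrans_comb[OF comb(1)]) (use N wtrans_zero in \<open>auto simp: V_def N'_def\<close>)
  moreover have "lift wbisim (comb p N') (comb p M')"
    by (rule lift.comb[OF comb(1)]) (use N lift_wbisim_zero in \<open>auto simp: M'_def N'_def\<close>)
  ultimately show ?case by auto
qed

end
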